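(* Let $T$ be a decomposition tree of a distance-hereditary graph $G$, and let $v$ be an internal node of $T$ labeled $\otimes$ with left child $v_l$ and right child $v_r$, such that property (P) holds at $v_l$ and at $v_r$. Then $$\hat\alpha(v)=\begin{cases}\hat\alpha(v_l)-\hat\beta(v_r) & \text{if } \hat\alpha(v_l)>\hat\beta(v_r),\\ \hat\alpha(v_r)-\hat\beta(v_l) & \text{if } \hat\alpha(v_r)>\hat\beta(v_l),\\ |\hat\alpha(v_l)-\hat\alpha(v_r)| \bmod 2 & \text{otherwise.}\end{cases}$$
   Context: All graphs are finite, simple, undirected. For a graph $H$ and $S\subseteq V(H)$, $N_H[S]$ is $S$ together with all vertices adjacent to a vertex of $S$, and $H[S]$ is the induced subgraph. Graphs carry a "twin set": a single-vertex graph on $x$ has twin set $\{x\}$. For vertex-disjoint graphs $G_l,G_r$ with twin sets $TS(G_l),TS(G_r)$: the true twin operation $G_l\otimes G_r$ has vertex set $V(G_l)\cup V(G_r)$, edge set $E(G_l)\cup E(G_r)\cup\{uw: u\in TS(G_l), w\in TS(G_r)\}$ and twin set $TS(G_l)\cup TS(G_r)$; the false twin operation $G_l\odot G_r$ has vertex set $V(G_l)\cup V(G_r)$, edge set $E(G_l)\cup E(G_r)$, twin set $TS(G_l)\cup TS(G_r)$; the attachment operation $G_l\oplus G_r$ has the same vertex and edge sets as $G_l\otimes G_r$ and twin set $TS(G_l)$. A decomposition tree $T$ of $G$ is a rooted binary tree whose leaves are in bijection with $V(G)$, each internal node having a left and a right child and a label in $\{\otimes,\odot,\oplus\}$; for each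 node $v$ define $\hat G(v)$ and $\hat{TS}(v)$ recursively: for a leaf $x$, the single-vertex graph on $x$ with twin set $\{x\}$; for an internal node $v$ with label $\circ$ and children $v_l,v_r$, $\hat G(v)=\hat G(v_l)\circ\hat G(v_r)$ with the corresponding twin set; one requires $\hat G(\text{root})=G$. Then $\hat G(v)$ is the subgraph of $G$ induced by the set $\hat V(v)$ of leaves below $v$. For a node $u$ and $0\le k\le|\hat{TS}(u)|$, call $S\subseteq\hat V(u)$ $k$-feasible if $\hat V(u)\setminus\hat{TS}(u)\subseteq N_{\hat G(u)}[S]$ and there is $X\subseteq S\cap\hat{TS}(u)$ with $|X|=k$ such that $\hat G(u)[S\setminus X]$ has a perfect matching. $\hat\gamma_k(u)$ is the minimum size of a $k$-feasible set. $\hat{min}(u)=\min\{\hat\gamma_k(u):0\le k\le|\hat{TS}(u)|\}$, and $\hat\alpha(u)$, $\hat\beta(u)$ are the smallest and the largest $k$ with $\hat\gamma_k(u)=\hat{min}(u)$. Property (P) holds at $u$ if for every $0\le k\le|\hat{TS}(u)|$: $\hat\gamma_k(u)=\hat{min}(u)+\hat\alpha(u)-k$ when $k\le\hat\alpha(u)$; $\hat\gamma_k(u)=\hat{min}(u)+k-\hat\beta(u)$ when $k\ge\hat\beta(u)$; $\hat\gamma_k(u)=\hat{min}(u)$ when $\hat\alpha(u)<k<\hat\beta(u)$ and $k-\hat\alpha(u)$ is even; and $\hat\gamma_k(u)=\hat{min}(u)+1$ otherwise. *)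

theory Defs
  imports Main "HOL-Library.Extended_Nat"
begin

definition path_in :: "'a set \<Rightarrow> 'a set set \<Rightarrow> 'a list \<Rightarrow> bool" where
  "path_in V E xs \<longleftrightarrow> xs \<noteq> [] \<and> set xs \<subseteq> V \<and>
     (\<forall>i. Suc i < length xs \<longrightarrow> {xs ! i, xs ! Suc i} \<in> E)"

text \<open>Distance in the graph (V, E) restricted to V (infinite if unreachable).\<close>
definition gdist :: "'a set \<Rightarrow> 'a set set \<Rightarrow> 'a \<Rightarrow> 'a \<Rightarrow> enat" where
  "gdist V E u w = (INF xs \<in> {xs. path_in V E xs \<and> hd xs = u \<and> last xs = w}.
                       enat (length xs - 1))"

definition gconnected :: "'a set \<Rightarrow> 'a set set \<Rightarrow> bool" where
  "gconnected V E \<longleftrightarrow> (\<forall>u\<in>V. \<forall>w\<in>V. \<exists>xs. path_in V E xs \<and> hd xs = u \<and> last xs = w)"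

text \<open>Distance-hereditary: every connected induced subgraph preserves distances.
  Paths in (S, E) only use vertices of S, so they are paths of the induced subgraph.\<close>
definition distance_hereditary :: "'a set \<Rightarrow> 'a set set \<Rightarrow> bool" where
  "distance_hereditary V E \<longleftrightarrow>
     (\<forall>S\<subseteq>V. S \<noteq> {} \<longrightarrow> gconnected S E \<longrightarrow> (\<forall>u\<in>S. \<forall>w\<in>S. gdist S E u w = gdist V E u w))"

definition cnbh :: "'a set \<Rightarrow> 'a set set \<Rightarrow> 'a set \<Rightarrow> 'a set" where
  "cnbh V E S = S \<union> {w\<in>V. \<exists>u\<in>S. {u, w} \<in> E}"

definition has_perfect_matching :: "'a set set \<Rightarrow> 'a set \<Rightarrow> bool" where
  "has_perfect_matching E S \<longleftrightarrow>
     (\<exists>M\<subseteq>E. (\<forall>e\<in>M. e \<subseteq> S) \<and> (\<forall>x\<in>S. \<exists>!e. e \<in> M \<and> x \<in> e))"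

datatype op = TrueTwin | FalseTwin | Attach

datatype 'a dtree = Leaf 'a | Node op "'a dtree" "'a dtree"

fun leaf_list :: "'a dtree \<Rightarrow> 'a list" where
  "leaf_list (Leaf x) = [x]"
| "leaf_list (Node _ l r) = leaf_list l @ leaf_list r"

definition hatV :: "'a dtree \<Rightarrow> 'a set" where
  "hatV t = set (leaf_list t)"

fun hatTS :: "'a dtree \<Rightarrow> 'a set" where
  "hatTS (Leaf x) = {x}"
| "hatTS (Node TrueTwin l r) = hatTS l \<union> hatTS r"
| "hatTS (Node FalseTwin l r) = hatTS l \<union> hatTS r"
| "hatTS (Node Attach l r) = hatTS l"

fun hatE :: "'a dtree \<Rightarrow> 'a set set" where
  "hatE (Leaf x) = {}"
| "hatE (Node FalseTwin l r) = hatE l \<union> hatE r"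
| "hatE (Node TrueTwin l r) = hatE l \<union> hatE r \<union> {{u, w} | u w. u \<in> hatTS l \<and> w \<in> hatTS r}"
| "hatE (Node Attach l r) = hatE l \<union> hatE r \<union> {{u, w} | u w. u \<in> hatTS l \<and> w \<in> hatTS r}"

fun subtrees :: "'a dtree \<Rightarrow> 'a dtree set" where
  "subtrees (Leaf x) = {Leaf x}"
| "subtrees (Node c l r) = insert (Node c l r) (subtrees l \<union> subtrees r)"

text \<open>T is a decomposition tree of G = (V, E): leaves in bijection with V, and hat G(root) = G.\<close>
definition decomposition_tree :: "'a dtree \<Rightarrow> 'a set \<Rightarrow> 'a set set \<Rightarrow> bool" where
  "decomposition_tree T V E \<longleftrightarrow> distinct (leaf_list T) \<and> hatV T = V \<and> hatE T = E"

definition k_feasible :: "'a dtree \<Rightarrow> nat \<Rightarrow> 'a set \<Rightarrow> bool" where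
  "k_feasible u k S \<longleftrightarrow> S \<subseteq> hatV u \<and>
     hatV u - hatTS u \<subseteq> cnbh (hatV u) (hatE u) S \<and>
     (\<exists>X. X \<subseteq> S \<inter> hatTS u \<and> card X = k \<and> has_perfect_matching (hatE u) (S - X))"

text \<open>Minimum size of a k-feasible set (infinity if there is none).\<close>
definition gamma_hat :: "'a dtree \<Rightarrow> nat \<Rightarrow> enat" where
  "gamma_hat u k = (INF S \<in> {S. k_feasible u k S}. enat (card S))"

definition min_hat :: "'a dtree \<Rightarrow> enat" where
  "min_hat u = Min (gamma_hat u ` {0..card (hatTS u)})"

definition alpha_hat :: "'a dtree \<Rightarrow> nat" where
  "alpha_hat u = Min {k. k \<le> card (hatTS u) \<and> gamma_hat u k = min_hat u}"

definition beta_hat :: "'a dtree \<Rightarrow> nat" where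
  "beta_hat u = Max {k. k \<le> card (hatTS u) \<and> gamma_hat u k = min_hat u}"

definition property_P :: "'a dtree \<Rightarrow> bool" where
  "property_P u \<longleftrightarrow> (\<forall>k\<le>card (hatTS u).
     (k \<le> alpha_hat u \<longrightarrow> gamma_hat u k = min_hat u + enat (alpha_hat u - k)) \<and>
     (k \<ge> beta_hat u \<longrightarrow> gamma_hat u k = min_hat u + enat (k - beta_hat u)) \<and>
     (alpha_hat u < k \<and> k < beta_hat u \<longrightarrow>
        gamma_hat u k = (if even (k - alpha_hat u) then min_hat u else min_hat u + 1)))"

end

theory Submission
  imports Defs
begin

definition feas :: "'a set \<Rightarrow> 'a set \<Rightarrow> 'a set set \<Rightarrow> nat \<Rightarrow> 'a set \<Rightarrow> bool" where
 "feas V TS E k S \<longleftrightarrow> S \<subseteq> V \<and> V - TS \<subseteq> cnbh V E S \<and>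
    (\<exists>X. X \<subseteq> S \<inter> TS \<and> card X = k \<and> has_perfect_matching E (S - X))"

lemma kf_feas: "k_feasible u k S = feas (hatV u) (hatTS u) (hatE u) k S"
  by (simp add: k_feasible_def feas_def)

definition gg :: "'a set \<Rightarrow> 'a set \<Rightarrow> 'a set set \<Rightarrow> bool" where
 "gg V TS E \<longleftrightarrow> finite V \<and> TS \<subseteq> V \<and> (\<forall>e\<in>E. \<exists>a b. e={a,b} \<and> a\<noteq>b \<and> a\<in>V \<and> b\<in>V)"

definition cross :: "'a set \<Rightarrow> 'a set \<Rightarrow> 'a set set" where
 "cross A B = {{u, w} | u w. u \<in> A \<and> w \<in> B}"

lemma cross_sym: "cross A B = cross B A"
  unfolding cross_def by (metis (no_types, opaque_lifting) insert_commute)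

lemma hatE_TT: "hatE (Node TrueTwin l r) = hatE l \<union> hatE r \<union> cross (hatTS l) (hatTS r)"
  by (simp add: cross_def)

lemma hatV_Node[simp]: "hatV (Node c l r) = hatV l \<union> hatV r"
  by (simp add: hatV_def)

lemma distinct_sub: "t \<in> subtrees T \<Longrightarrow> distinct (leaf_list T) \<Longrightarrow> distinct (leaf_list t)"
  by (induction T) auto

definition eok :: "'a set \<Rightarrow> 'a set set \<Rightarrow> bool" where
 "eok V E \<longleftrightarrow> (\<forall>e\<in>E. \<exists>a b. e={a,b} \<and> a\<noteq>b \<and> a\<in>V \<and> b\<in>V)"

lemma gg_eok: "gg V TS E \<longleftrightarrow> finite V \<and> TS \<subseteq> V \<and> eok V E"
  unfolding gg_def eok_def by (rule refl)

lemma eok_mono: "eok V1 E \<Longrightarrow> V1 \<subseteq> V \<Longrightarrow> eok V E"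
  unfolding eok_def by (meson subsetD)

lemma eok_Un: "eok V E1 \<Longrightarrow> eok V E2 \<Longrightarrow> eok V (E1 \<union> E2)"
  unfolding eok_def by (meson UnE)

lemma eok_cross:
  assumes "A \<subseteq> V1" "B \<subseteq> V2" "V1 \<inter> V2 = {}"
  shows "eok (V1 \<union> V2) (cross A B)"
  unfolding eok_def
proof
  fix e assume "e \<in> cross A B"
  then obtain u w where e: "e = {u,w}" "u \<in> A" "w \<in> B" unfolding cross_def by blast
  then have "u \<in> V1" "w \<in> V2" using assms by auto
  then have "u \<noteq> w" using assms(3) by auto
  then show "\<exists>a b. e = {a, b} \<and> a \<noteq> b \<and> a \<in> V1 \<union> V2 \<and> b \<in> V1 \<union> V2"
    using e \<open>u \<in> V1\<close> \<open>w \<in> V2\<close> by (intro exI[of _ u] exI[of _ w]) simp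
qed

lemma invariant:
  "distinct (leaf_list u) \<Longrightarrow> gg (hatV u) (hatTS u) (hatE u) \<and> hatTS u \<noteq> {} \<and>
     (\<forall>x\<in>hatV u - hatTS u. \<exists>y. {x,y} \<in> hatE u)"
proof (induction u)
  case (Leaf x)
  then show ?case by (simp add: gg_def hatV_def)
next
  case (Node c l r)
  then have dl: "distinct (leaf_list l)" and dr: "distinct (leaf_list r)"
    and disj: "hatV l \<inter> hatV r = {}" by (auto simp: hatV_def)
  from Node.IH(1)[OF dl] have gl: "gg (hatV l) (hatTS l) (hatE l)" and nl: "hatTS l \<noteq> {}"
    and il: "\<forall>x\<in>hatV l - hatTS l. \<exists>y. {x,y} \<in> hatE l" by auto
  from Node.IH(2)[OF dr] have gr: "gg (hatV r) (hatTS r) (hatE r)" and nr: "hatTS r \<noteq> {}"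
    and ir: "\<forall>x\<in>hatV r - hatTS r. \<exists>y. {x,y} \<in> hatE r" by auto
  have e1: "eok (hatV l \<union> hatV r) (hatE l)" "eok (hatV l \<union> hatV r) (hatE r)"
    using gl gr eok_mono unfolding gg_eok by blast+
  have e2: "eok (hatV l \<union> hatV r) (cross (hatTS l) (hatTS r))"
    using gl gr disj eok_cross unfolding gg_eok by blast
  have fin: "finite (hatV l \<union> hatV r)" using gl gr unfolding gg_eok by simp
  have tsl: "hatTS l \<subseteq> hatV l" "hatTS r \<subseteq> hatV r" using gl gr unfolding gg_eok by auto
  show ?case
  proof (cases c)
    case TrueTwin
    have "gg (hatV l \<union> hatV r) (hatTS l \<union> hatTS r) (hatE l \<union> hatE r \<union> cross (hatTS l) (hatTS r))"
      using e1 e2 fin tsl unfolding gg_eok by (auto intro!: eok_Un)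
    then have "gg (hatV (Node c l r)) (hatTS (Node c l r)) (hatE (Node c l r))"
      using TrueTwin by (simp del: hatE.simps add: hatE_TT)
    moreover have "\<forall>x\<in>hatV (Node c l r) - hatTS (Node c l r). \<exists>y. {x,y} \<in> hatE (Node c l r)"
    proof
      fix x assume x: "x \<in> hatV (Node c l r) - hatTS (Node c l r)"
      have sub: "hatE l \<subseteq> hatE (Node c l r)" "hatE r \<subseteq> hatE (Node c l r)" using TrueTwin by auto
      show "\<exists>y. {x,y} \<in> hatE (Node c l r)"
      proof (cases "x \<in> hatV l")
        case True
        then have "x \<in> hatV l - hatTS l" using x TrueTwin by auto
        then show ?thesis using il sub by blast
      next
        case False
        then have "x \<in> hatV r - hatTS r" using x TrueTwin by auto
        then show ?thesis using ir sub by blast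
      qed
    qed
    moreover have "hatTS (Node c l r) \<noteq> {}" using nl TrueTwin by simp
    ultimately show ?thesis by blast
  next
    case FalseTwin
    have "gg (hatV (Node c l r)) (hatTS (Node c l r)) (hatE (Node c l r))"
      using e1 fin tsl FalseTwin unfolding gg_eok by (auto intro!: eok_Un)
    moreover have "\<forall>x\<in>hatV (Node c l r) - hatTS (Node c l r). \<exists>y. {x,y} \<in> hatE (Node c l r)"
    proof
      fix x assume x: "x \<in> hatV (Node c l r) - hatTS (Node c l r)"
      have sub: "hatE l \<subseteq> hatE (Node c l r)" "hatE r \<subseteq> hatE (Node c l r)" using FalseTwin by auto
      show "\<exists>y. {x,y} \<in> hatE (Node c l r)"
      proof (cases "x \<in> hatV l")
        case True
        then have "x \<in> hatV l - hatTS l" using x FalseTwin by auto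
        then show ?thesis using il sub by blast
      next
        case False
        then have "x \<in> hatV r - hatTS r" using x FalseTwin by auto
        then show ?thesis using ir sub by blast
      qed
    qed
    moreover have "hatTS (Node c l r) \<noteq> {}" using nl FalseTwin by simp
    ultimately show ?thesis by blast
  next
    case Attach
    have hA: "hatE (Node c l r) = hatE l \<union> hatE r \<union> cross (hatTS l) (hatTS r)"
      using Attach by (simp add: cross_def)
    have NB: "\<exists>y. {x,y} \<in> hatE (Node c l r)" if x: "x \<in> hatV (Node c l r) - hatTS (Node c l r)" for x
    proof -
      obtain t where t: "t \<in> hatTS l" using nl by auto
      show ?thesis
      proof (cases "x \<in> hatV l")
        case True
        then have "x \<in> hatV l - hatTS l" using x Attach by auto
        then show ?thesis using il hA by blast
      next
        case False
        then have xr: "x \<in> hatV r" using x by auto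
        show ?thesis
        proof (cases "x \<in> hatTS r")
          case True
          then have "{t,x} \<in> cross (hatTS l) (hatTS r)" using t unfolding cross_def by blast
          then have "{t,x} \<in> hatE (Node c l r)" using hA by blast
          then show ?thesis by (metis insert_commute)
        next
          case False
          then show ?thesis using xr ir hA by blast
        qed
      qed
    qed
    have "gg (hatV l \<union> hatV r) (hatTS l) (hatE l \<union> hatE r \<union> cross (hatTS l) (hatTS r))"
      using e1 e2 fin tsl unfolding gg_eok by (auto intro!: eok_Un)
    then have G: "gg (hatV (Node c l r)) (hatTS (Node c l r)) (hatE (Node c l r))"
      using Attach hA by (simp del: hatE.simps)
    have "hatTS (Node c l r) \<noteq> {}" using nl Attach by simp
    then show ?thesis using G NB by blast
  qed
qed

definition pm2 :: "'a set set \<Rightarrow> 'a set \<Rightarrow> 'a set set \<Rightarrow> bool" where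
 "pm2 E S M \<longleftrightarrow> M \<subseteq> E \<and> (\<forall>e\<in>M. e \<subseteq> S) \<and> (\<forall>x\<in>S. \<exists>e\<in>M. x\<in>e) \<and>
    (\<forall>x\<in>S. \<forall>e1\<in>M. \<forall>e2\<in>M. x\<in>e1 \<longrightarrow> x\<in>e2 \<longrightarrow> e1=e2)"
lemma pm_iff: "has_perfect_matching E S \<longleftrightarrow> (\<exists>M. pm2 E S M)"
  unfolding has_perfect_matching_def pm2_def
  apply (rule iffI)
   apply (elim exE conjE)
   apply (rule_tac x=M in exI)
   apply (intro conjI; assumption?)
    apply (meson)
   apply (metis)
  apply (elim exE conjE)
  apply (rule_tac x=M in exI)
  apply (intro conjI; assumption?)
  apply (metis)
  done

lemma pm2D:
  assumes "pm2 E S M"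
  shows "M \<subseteq> E" "\<forall>e\<in>M. e \<subseteq> S" "\<forall>x\<in>S. \<exists>e\<in>M. x\<in>e"
     "\<forall>x\<in>S. \<forall>e1\<in>M. \<forall>e2\<in>M. x\<in>e1 \<longrightarrow> x\<in>e2 \<longrightarrow> e1=e2"
  using assms unfolding pm2_def by blast+

lemma eok_D: assumes "eok V E" "e \<in> E" obtains a b where "e = {a,b}" "a \<noteq> b" "a \<in> V" "b \<in> V"
  using assms unfolding eok_def by meson

lemma eok_sub: "eok V E \<Longrightarrow> e \<in> E \<Longrightarrow> e \<subseteq> V"
  by (erule eok_D) auto

lemma eok_card: "eok V E \<Longrightarrow> e \<in> E \<Longrightarrow> card e = 2"
  by (erule eok_D) auto

lemma pm_even:
  assumes "has_perfect_matching E S" "finite S" "eok V E"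
  shows "even (card S)"
proof -
  obtain M where "pm2 E S M" using assms(1) unfolding pm_iff by (elim exE)
  note M = pm2D[OF this]
  have SU: "S = \<Union>M" using M(2,3) by blast
  have "M \<subseteq> Pow S" using M(2) by blast
  then have finM: "finite M" using assms(2) by (simp add: finite_subset)
  have two: "card e = 2" if "e \<in> M" for e
    using eok_card[OF assms(3)] M(1) that by blast
  have disj: "\<forall>e1\<in>M. \<forall>e2\<in>M. e1 \<noteq> e2 \<longrightarrow> e1 \<inter> e2 = {}"
    using M(2,4) by blast
  have "card (\<Union>M) = (\<Sum>e\<in>M. card e)"
  proof (rule card_Union_disjoint)
    show "pairwise disjnt M" using disj unfolding pairwise_def disjnt_def by blast
    show "\<And>e. e \<in> M \<Longrightarrow> finite e" using M(2) assms(2) by (meson finite_subset)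
  qed
  also have "\<dots> = (\<Sum>e\<in>M. 2)" using two by simp
  finally show ?thesis using SU by simp
qed

lemma feas_card:
  assumes "feas V TS E k S" "finite V" "eok V E"
  shows "k \<le> card S \<and> even (card S - k)"
proof -
  obtain X where X: "X \<subseteq> S \<inter> TS" "card X = k" "has_perfect_matching E (S - X)"
    using assms(1) unfolding feas_def by blast
  have fS: "finite S" using assms(1,2) unfolding feas_def using finite_subset by blast
  have "X \<subseteq> S" using X(1) by blast
  then have "card (S - X) = card S - k" using X(2) fS by (simp add: card_Diff_subset finite_subset)
  moreover have "k \<le> card S" using X fS by (metis card_mono le_inf_iff)
  moreover have "even (card (S - X))" using pm_even[OF X(3) _ assms(3)] fS by simp
  ultimately show ?thesis by simp
qed

lemma feas_le_TS:
  assumes "feas V TS E k S" "finite V" "TS \<subseteq> V"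
  shows "k \<le> card TS"
proof -
  obtain X where X: "X \<subseteq> S \<inter> TS" "card X = k"
    using assms(1) unfolding feas_def by blast
  then show ?thesis using assms(2,3) by (metis card_mono finite_subset le_inf_iff)
qed

lemma exists_feas:
  assumes "gg V TS E" "\<forall>x\<in>V - TS. \<exists>y. {x,y} \<in> E"
  shows "\<exists>k S. k \<le> card TS \<and> feas V TS E k S"
proof -
  have finV: "finite V" and TSV: "TS \<subseteq> V" and eo: "eok V E" using assms(1) unfolding gg_eok by auto
  have finE: "finite E"
  proof -
    have "E \<subseteq> Pow V" using eok_sub[OF eo] by blast
    then show ?thesis using finV finite_subset by blast
  qed
  define F where "F = {M. M \<subseteq> E \<and> (\<forall>e1\<in>M. \<forall>e2\<in>M. e1 \<noteq> e2 \<longrightarrow> e1 \<inter> e2 = {})}"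
  have finF: "finite F" unfolding F_def using finE by (simp add: finite_subset)
  have "{} \<in> F" unfolding F_def by simp
  then have "card ` F \<noteq> {}" by blast
  then have "Max (card ` F) \<in> card ` F" using finF by (intro Max_in) auto
  then obtain M where MF: "M \<in> F" and Mmax: "card M = Max (card ` F)" by auto
  have maxM: "card M' \<le> card M" if "M' \<in> F" for M' using Mmax finF that by simp
  have ME: "M \<subseteq> E" and Md: "\<forall>e1\<in>M. \<forall>e2\<in>M. e1 \<noteq> e2 \<longrightarrow> e1 \<inter> e2 = {}" using MF unfolding F_def by auto
  have finM: "finite M" using ME finE finite_subset by blast
  define S where "S = \<Union>M \<union> TS"
  define X where "X = TS - \<Union>M"
  have UMV: "\<Union>M \<subseteq> V" using ME eok_sub[OF eo] by blast
  have "S \<subseteq> V" unfolding S_def using UMV TSV by blast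
  moreover have "X \<subseteq> S \<inter> TS" unfolding X_def S_def by blast
  moreover have "has_perfect_matching E (S - X)"
  proof -
    have "S - X = \<Union>M" unfolding S_def X_def by blast
    have "pm2 E (S - X) M" unfolding pm2_def
    proof (intro conjI)
      show "\<forall>x\<in>S - X. \<forall>e1\<in>M. \<forall>e2\<in>M. x \<in> e1 \<longrightarrow> x \<in> e2 \<longrightarrow> e1 = e2"
        using Md by blast
    qed (use ME \<open>S - X = \<Union>M\<close> in auto)
    then show ?thesis unfolding pm_iff by blast
  qed
  moreover have "V - TS \<subseteq> cnbh V E S"
  proof
    fix x assume x: "x \<in> V - TS"
    show "x \<in> cnbh V E S"
    proof (cases "x \<in> \<Union>M")
      case True then show ?thesis unfolding cnbh_def S_def by blast
    next
      case False
      obtain y where y: "{x,y} \<in> E" using assms(2) x by blast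
      show ?thesis
      proof (cases "y \<in> \<Union>M")
        case True
        then have "y \<in> S" unfolding S_def by blast
        moreover have "{y,x} \<in> E" using y by (simp add: insert_commute)
        ultimately show ?thesis unfolding cnbh_def using x by blast
      next
        case yn: False
        have new: "{x,y} \<notin> M" using False by blast
        have "\<forall>e\<in>M. {x,y} \<inter> e = {}" using False yn by blast
        then have "insert {x,y} M \<in> F" unfolding F_def using ME Md y by auto
        then have "card (insert {x,y} M) \<le> card M" by (rule maxM)
        then show ?thesis using new finM by simp
      qed
    qed
  qed
  moreover have "card X \<le> card TS" unfolding X_def using finV TSV
    by (meson Diff_subset card_mono finite_subset)
  ultimately show ?thesis unfolding feas_def by blast
qed

lemma crossE:
  assumes "e \<in> cross A B" obtains u w where "e = {u,w}" "u \<in> A" "w \<in> B"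
  using assms unfolding cross_def by blast

lemma cnbh_mono: "V \<subseteq> V' \<Longrightarrow> E \<subseteq> E' \<Longrightarrow> S \<subseteq> S' \<Longrightarrow> cnbh V E S \<subseteq> cnbh V' E' S'"
  unfolding cnbh_def by blast

lemma split_side:
  assumes g1: "gg V1 TS1 E1" and g2: "gg V2 TS2 E2" and dj: "V1 \<inter> V2 = {}"
    and SV: "S \<subseteq> V1 \<union> V2"
    and dom: "(V1 \<union> V2) - (TS1 \<union> TS2) \<subseteq> cnbh (V1 \<union> V2) (E1 \<union> E2 \<union> cross TS1 TS2) S"
    and X: "X \<subseteq> S \<inter> (TS1 \<union> TS2)"
    and pm: "pm2 (E1 \<union> E2 \<union> cross TS1 TS2) (S - X) M"
  shows "feas V1 TS1 E1 (card (X \<inter> V1) + card (M \<inter> cross TS1 TS2)) (S \<inter> V1)"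
proof -
  note M = pm2D[OF pm]
  have fin1: "finite V1" and T1: "TS1 \<subseteq> V1" and eo1: "eok V1 E1" using g1 unfolding gg_eok by blast+
  have fin2: "finite V2" and T2: "TS2 \<subseteq> V2" and eo2: "eok V2 E2" using g2 unfolding gg_eok by blast+
  define C where "C = cross TS1 TS2"
  have finS: "finite S" using SV fin1 fin2 by (meson finite_Un finite_subset)
  have "M \<subseteq> Pow S" using M(2) by blast
  then have finM: "finite M" using finS by (simp add: finite_subset)
  have CV: "u \<in> V1 \<and> w \<in> V2 \<and> u \<in> TS1 \<and> w \<in> TS2" if "e \<in> C" "e = {u,w}" "u \<in> TS1" "w \<in> TS2" for e u w
    using that T1 T2 by blast
  have one: "e \<inter> V1 = {u}" if "e = {u,w}" "u \<in> TS1" "w \<in> TS2" for e u w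
    using that T1 T2 dj by blast
  have one': "card (e \<inter> V1) = 1" if eC: "e \<in> C" for e
  proof -
    obtain u w where "e = {u,w}" "u \<in> TS1" "w \<in> TS2" using eC unfolding C_def by (rule crossE)
    then show ?thesis using one by simp
  qed
  have inC1: "x \<in> TS1" if eC: "e \<in> C" "x \<in> e" "x \<in> V1" for e x
  proof -
    obtain u w where uw: "e = {u,w}" "u \<in> TS1" "w \<in> TS2" using eC(1) unfolding C_def by (rule crossE)
    then have "x = u \<or> x = w" using eC(2) by blast
    then show ?thesis using uw eC(3) T2 dj by blast
  qed
  have inC2: "x \<in> TS1 \<union> TS2" if eC: "e \<in> C" "x \<in> e" for e x
  proof -
    obtain u w where uw: "e = {u,w}" "u \<in> TS1" "w \<in> TS2" using eC(1) unfolding C_def by (rule crossE)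
    then have "x = u \<or> x = w" using eC(2) by blast
    then show ?thesis using uw by blast
  qed
  have notsub: "\<not> e \<subseteq> V1" if eC: "e \<in> C" for e
  proof -
    obtain u w where uw: "e = {u,w}" "u \<in> TS1" "w \<in> TS2" using eC unfolding C_def by (rule crossE)
    then show ?thesis using T2 dj by blast
  qed
  define Cl where "Cl = (\<Union>e\<in>M \<inter> C. e \<inter> V1)"
  have card_Cl: "card Cl = card (M \<inter> C)"
  proof -
    have "card Cl = (\<Sum>e\<in>M \<inter> C. card (e \<inter> V1))" unfolding Cl_def
    proof (rule card_UN_disjoint)
      show "finite (M \<inter> C)" using finM by simp
      show "\<forall>e\<in>M \<inter> C. finite (e \<inter> V1)" using fin1 by simp
      show "\<forall>i\<in>M \<inter> C. \<forall>j\<in>M \<inter> C. i \<noteq> j \<longrightarrow> i \<inter> V1 \<inter> (j \<inter> V1) = {}"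
        using M(2,4) by blast
    qed
    also have "\<dots> = (\<Sum>e\<in>M \<inter> C. 1)" using one' by simp
    finally show ?thesis by simp
  qed
  have Cl_sub: "Cl \<subseteq> (S - X) \<inter> TS1 \<inter> V1"
  proof
    fix x assume "x \<in> Cl"
    then obtain e where e: "e \<in> M" "e \<in> C" "x \<in> e" "x \<in> V1" unfolding Cl_def by blast
    then have "x \<in> S - X" using M(2) by blast
    moreover have "x \<in> TS1" using inC1 e by blast
    ultimately show "x \<in> (S - X) \<inter> TS1 \<inter> V1" using e by blast
  qed
  define X' where "X' = X \<inter> V1 \<union> Cl"
  have "card X' = card (X \<inter> V1) + card Cl" unfolding X'_def
  proof (rule card_Un_disjoint)
    show "finite (X \<inter> V1)" using fin1 by simp
    show "finite Cl" using Cl_sub fin1 by (meson finite_subset le_inf_iff)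
    show "X \<inter> V1 \<inter> Cl = {}" using Cl_sub by blast
  qed
  then have cardX': "card X' = card (X \<inter> V1) + card (M \<inter> cross TS1 TS2)" using card_Cl C_def by simp
  have X'sub: "X' \<subseteq> (S \<inter> V1) \<inter> TS1"
  proof -
    have "X \<inter> V1 \<subseteq> TS1" using X T2 dj by blast
    then show ?thesis unfolding X'_def using Cl_sub X by blast
  qed
  have domin: "V1 - TS1 \<subseteq> cnbh V1 E1 (S \<inter> V1)"
  proof
    fix x assume x: "x \<in> V1 - TS1"
    then have "x \<notin> TS2" using T2 dj by blast
    then have "x \<in> cnbh (V1 \<union> V2) (E1 \<union> E2 \<union> cross TS1 TS2) S" using dom x by blast
    then have "x \<in> S \<or> (\<exists>u\<in>S. {u,x} \<in> E1 \<union> E2 \<union> C)" unfolding cnbh_def C_def by blast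
    then show "x \<in> cnbh V1 E1 (S \<inter> V1)"
    proof
      assume "x \<in> S" then show ?thesis using x unfolding cnbh_def by blast
    next
      assume "\<exists>u\<in>S. {u,x} \<in> E1 \<union> E2 \<union> C"
      then obtain u where u: "u \<in> S" "{u,x} \<in> E1 \<union> E2 \<union> C" by blast
      have "{u,x} \<notin> E2" using eok_sub[OF eo2] x dj by blast
      moreover have "{u,x} \<notin> C" using inC2 x \<open>x \<notin> TS2\<close> by blast
      ultimately have "{u,x} \<in> E1" using u by blast
      moreover then have "u \<in> V1" using eok_sub[OF eo1] by blast
      ultimately show ?thesis using u x unfolding cnbh_def by blast
    qed
  qed
  have pmE1: "pm2 E1 (S \<inter> V1 - X') (M \<inter> E1)"
    unfolding pm2_def
  proof (intro conjI)
    show "M \<inter> E1 \<subseteq> E1" by blast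
    show "\<forall>e\<in>M \<inter> E1. e \<subseteq> S \<inter> V1 - X'"
    proof
      fix e assume e: "e \<in> M \<inter> E1"
      have a: "e \<subseteq> S - X" using e M(2) by blast
      have b: "e \<subseteq> V1" using e eok_sub[OF eo1] by blast
      have c: "e \<inter> Cl = {}"
      proof (rule ccontr)
        assume "e \<inter> Cl \<noteq> {}"
        then obtain y where y: "y \<in> e" "y \<in> Cl" by blast
        then obtain e' where e': "e' \<in> M" "e' \<in> C" "y \<in> e'" unfolding Cl_def by blast
        have "y \<in> S - X" using y a by blast
        then have "e = e'" using M(4) e e' y by blast
        then show False using notsub e' b by blast
      qed
      show "e \<subseteq> S \<inter> V1 - X'" using a b c unfolding X'_def by blast
    qed
    show "\<forall>x\<in>S \<inter> V1 - X'. \<exists>e\<in>M \<inter> E1. x \<in> e"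
    proof
      fix x assume x: "x \<in> S \<inter> V1 - X'"
      then have xSX: "x \<in> S - X" unfolding X'_def by blast
      then obtain e where e: "e \<in> M" "x \<in> e" using M(3) by blast
      have "e \<notin> E2" using eok_sub[OF eo2] x e dj by blast
      moreover have "e \<notin> C"
      proof
        assume "e \<in> C"
        then have "x \<in> Cl" unfolding Cl_def using e x by blast
        then show False using x unfolding X'_def by blast
      qed
      ultimately have "e \<in> E1" using e M(1) unfolding C_def by blast
      then show "\<exists>e\<in>M \<inter> E1. x \<in> e" using e by blast
    qed
    show "\<forall>x\<in>S \<inter> V1 - X'. \<forall>e1\<in>M \<inter> E1. \<forall>e2\<in>M \<inter> E1. x \<in> e1 \<longrightarrow> x \<in> e2 \<longrightarrow> e1 = e2"
      using M(4) unfolding X'_def by blast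
  qed
  show ?thesis unfolding feas_def pm_iff
    using domin X'sub cardX' pmE1 by blast
qed

lemma split_feas:
  assumes g1: "gg V1 TS1 E1" and g2: "gg V2 TS2 E2" and dj: "V1 \<inter> V2 = {}"
    and f: "feas (V1 \<union> V2) (TS1 \<union> TS2) (E1 \<union> E2 \<union> cross TS1 TS2) k S"
  shows "\<exists>a b c. k = a + b \<and> feas V1 TS1 E1 (a+c) (S \<inter> V1) \<and> feas V2 TS2 E2 (b+c) (S \<inter> V2)"
proof -
  have fin1: "finite V1" and T1: "TS1 \<subseteq> V1" using g1 unfolding gg_eok by blast+
  have fin2: "finite V2" and T2: "TS2 \<subseteq> V2" using g2 unfolding gg_eok by blast+
  obtain X M where SV: "S \<subseteq> V1 \<union> V2"
    and dom: "(V1 \<union> V2) - (TS1 \<union> TS2) \<subseteq> cnbh (V1 \<union> V2) (E1 \<union> E2 \<union> cross TS1 TS2) S"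
    and X: "X \<subseteq> S \<inter> (TS1 \<union> TS2)" "card X = k"
    and pm: "pm2 (E1 \<union> E2 \<union> cross TS1 TS2) (S - X) M"
    using f unfolding feas_def pm_iff by blast
  have A: "feas V1 TS1 E1 (card (X \<inter> V1) + card (M \<inter> cross TS1 TS2)) (S \<inter> V1)"
    by (rule split_side[OF g1 g2 dj SV dom X(1) pm])
  have eqE: "E2 \<union> E1 \<union> cross TS2 TS1 = E1 \<union> E2 \<union> cross TS1 TS2"
    unfolding cross_sym[of TS2 TS1] by blast
  have dj': "V2 \<inter> V1 = {}" using dj by blast
  have SV': "S \<subseteq> V2 \<union> V1" using SV by blast
  have dom': "(V2 \<union> V1) - (TS2 \<union> TS1) \<subseteq> cnbh (V2 \<union> V1) (E2 \<union> E1 \<union> cross TS2 TS1) S"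
    using dom unfolding eqE by (simp add: Un_commute)
  have X': "X \<subseteq> S \<inter> (TS2 \<union> TS1)" using X(1) by blast
  have pm': "pm2 (E2 \<union> E1 \<union> cross TS2 TS1) (S - X) M" using pm unfolding eqE .
  have B: "feas V2 TS2 E2 (card (X \<inter> V2) + card (M \<inter> cross TS1 TS2)) (S \<inter> V2)"
    using split_side[OF g2 g1 dj' SV' dom' X' pm'] unfolding cross_sym[of TS2 TS1] .
  have "X = (X \<inter> V1) \<union> (X \<inter> V2)" using X(1) T1 T2 by blast
  then have "card X = card (X \<inter> V1) + card (X \<inter> V2)"
    using fin1 fin2 dj by (metis card_Un_disjoint finite_Int inf_commute inf_left_commute inf_bot_right)
  then show ?thesis using A B X(2) by blast
qed

lemma combine:
  assumes g1: "gg V1 TS1 E1" and g2: "gg V2 TS2 E2" and dj: "V1 \<inter> V2 = {}"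
    and f1: "feas V1 TS1 E1 k1 S1" and f2: "feas V2 TS2 E2 k2 S2"
  shows "feas (V1 \<union> V2) (TS1 \<union> TS2) (E1 \<union> E2 \<union> cross TS1 TS2) (k1 + k2 - 2 * min k1 k2) (S1 \<union> S2)"
proof -
  have fin1: "finite V1" and T1: "TS1 \<subseteq> V1" using g1 unfolding gg_eok by blast+
  have fin2: "finite V2" and T2: "TS2 \<subseteq> V2" using g2 unfolding gg_eok by blast+
  obtain X1 M1 where S1V: "S1 \<subseteq> V1" and dom1: "V1 - TS1 \<subseteq> cnbh V1 E1 S1"
    and X1: "X1 \<subseteq> S1 \<inter> TS1" "card X1 = k1" and pm1: "pm2 E1 (S1 - X1) M1"
    using f1 unfolding feas_def pm_iff by blast
  obtain X2 M2 where S2V: "S2 \<subseteq> V2" and dom2: "V2 - TS2 \<subseteq> cnbh V2 E2 S2"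
    and X2: "X2 \<subseteq> S2 \<inter> TS2" "card X2 = k2" and pm2: "pm2 E2 (S2 - X2) M2"
    using f2 unfolding feas_def pm_iff by blast
  note P1 = pm2D[OF pm1] and P2 = pm2D[OF pm2]
  define j where "j = min k1 k2"
  have finX1: "finite X1" using X1 S1V fin1 by (meson finite_subset le_inf_iff)
  have finX2: "finite X2" using X2 S2V fin2 by (meson finite_subset le_inf_iff)
  obtain A1 where A1: "A1 \<subseteq> X1" "card A1 = j" "finite A1"
    using obtain_subset_with_card_n[of j X1] X1(2) unfolding j_def by auto
  obtain A2 where A2: "A2 \<subseteq> X2" "card A2 = j" "finite A2"
    using obtain_subset_with_card_n[of j X2] X2(2) unfolding j_def by auto
  obtain g where bij: "bij_betw g A1 A2" using finite_same_card_bij[OF A1(3) A2(3)] A1(2) A2(2) by auto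
  have gA: "g x \<in> A2" if "x \<in> A1" for x using bij that bij_betwE by blast
  have ginj: "inj_on g A1" using bij bij_betw_def by blast
  have gsurj: "\<exists>y\<in>A1. g y = x" if "x \<in> A2" for x
    using bij that bij_betw_imp_surj_on by (metis imageE)
  define Mc where "Mc = (\<lambda>x. {x, g x}) ` A1"
  define M where "M = M1 \<union> M2 \<union> Mc"
  define X where "X = (X1 - A1) \<union> (X2 - A2)"
  define S where "S = S1 \<union> S2"
  have inV1: "x \<in> V1" if "x \<in> S1" for x using that S1V by blast
  have inV2: "x \<in> V2" if "x \<in> S2" for x using that S2V by blast
  have n12: "x \<notin> V2" if "x \<in> V1" for x using that dj by blast
  have A1S: "A1 \<subseteq> S1 \<inter> TS1" using A1 X1 by blast
  have A2S: "A2 \<subseteq> S2 \<inter> TS2" using A2 X2 by blast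
  have cardX: "card X = k1 + k2 - 2 * min k1 k2"
  proof -
    have "card (X1 - A1) = k1 - j" using A1 X1 finX1 by (simp add: card_Diff_subset)
    moreover have "card (X2 - A2) = k2 - j" using A2 X2 finX2 by (simp add: card_Diff_subset)
    moreover have "(X1 - A1) \<inter> (X2 - A2) = {}" using X1 X2 S1V S2V dj by blast
    ultimately have "card X = (k1 - j) + (k2 - j)" unfolding X_def
      using finX1 finX2 by (simp add: card_Un_disjoint)
    then show ?thesis unfolding j_def by simp
  qed
  have Xsub: "X \<subseteq> S \<inter> (TS1 \<union> TS2)" unfolding X_def S_def using X1 X2 by blast
  have SVV: "S \<subseteq> V1 \<union> V2" unfolding S_def using S1V S2V by blast
  have dom: "(V1 \<union> V2) - (TS1 \<union> TS2) \<subseteq> cnbh (V1 \<union> V2) (E1 \<union> E2 \<union> cross TS1 TS2) S"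
  proof
    fix x assume x: "x \<in> (V1 \<union> V2) - (TS1 \<union> TS2)"
    have m1: "cnbh V1 E1 S1 \<subseteq> cnbh (V1 \<union> V2) (E1 \<union> E2 \<union> cross TS1 TS2) S"
      unfolding S_def by (rule cnbh_mono) blast+
    have m2: "cnbh V2 E2 S2 \<subseteq> cnbh (V1 \<union> V2) (E1 \<union> E2 \<union> cross TS1 TS2) S"
      unfolding S_def by (rule cnbh_mono) blast+
    show "x \<in> cnbh (V1 \<union> V2) (E1 \<union> E2 \<union> cross TS1 TS2) S"
      using x dom1 dom2 m1 m2 by blast
  qed
  have Mc_cross: "Mc \<subseteq> cross TS1 TS2"
  proof
    fix e assume "e \<in> Mc"
    then obtain x where x: "x \<in> A1" "e = {x, g x}" unfolding Mc_def by blast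
    then have "x \<in> TS1" "g x \<in> TS2" using A1S A2S gA by blast+
    then show "e \<in> cross TS1 TS2" unfolding cross_def using x by blast
  qed
  have McE: "\<exists>y\<in>A1. e = {y, g y}" if "e \<in> Mc" for e using that unfolding Mc_def by blast
  have pmM: "pm2 (E1 \<union> E2 \<union> cross TS1 TS2) (S - X) M"
    unfolding pm2_def
  proof (intro conjI)
    show "M \<subseteq> E1 \<union> E2 \<union> cross TS1 TS2" unfolding M_def using P1(1) P2(1) Mc_cross by blast
    show "\<forall>e\<in>M. e \<subseteq> S - X"
    proof
      fix e assume e: "e \<in> M"
      show "e \<subseteq> S - X"
      proof (cases "e \<in> M1")
        case True
        then have "e \<subseteq> S1 - X1" using P1(2) by blast
        then show ?thesis unfolding S_def X_def using inV1 n12 X2 S2V by blast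
      next
        case F1: False
        show ?thesis
        proof (cases "e \<in> M2")
          case True
          then have "e \<subseteq> S2 - X2" using P2(2) by blast
          then show ?thesis unfolding S_def X_def using inV2 n12 X1 S1V by blast
        next
          case False
          then have "e \<in> Mc" using e F1 unfolding M_def by blast
          then obtain y where y: "y \<in> A1" "e = {y, g y}" using McE by blast
          have "y \<in> S1" "y \<in> V1" "y \<notin> X1 - A1" using y A1S S1V by blast+
          moreover have "g y \<in> S2" "g y \<in> V2" "g y \<notin> X2 - A2" using gA[OF y(1)] A2S S2V by blast+
          ultimately show ?thesis unfolding S_def X_def using y(2) n12 X1 X2 S1V S2V by blast
        qed
      qed
    qed
    show "\<forall>x\<in>S - X. \<exists>e\<in>M. x \<in> e"
    proof
      fix x assume x: "x \<in> S - X"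
      show "\<exists>e\<in>M. x \<in> e"
      proof (cases "x \<in> S1")
        case True
        show ?thesis
        proof (cases "x \<in> X1")
          case True
          then have "x \<in> A1" using x unfolding X_def by blast
          then have "{x, g x} \<in> M" unfolding M_def Mc_def by blast
          then show ?thesis by blast
        next
          case False
          then have "x \<in> S1 - X1" using \<open>x \<in> S1\<close> by blast
          then show ?thesis using P1(3) unfolding M_def by blast
        qed
      next
        case False
        then have xS2: "x \<in> S2" using x unfolding S_def by blast
        show ?thesis
        proof (cases "x \<in> X2")
          case True
          then have "x \<in> A2" using x unfolding X_def by blast
          then obtain y where y: "y \<in> A1" "g y = x" using gsurj by blast
          then have "{y, g y} \<in> M" unfolding M_def Mc_def by blast
          then show ?thesis using y by blast
        next
          case False
          then have "x \<in> S2 - X2" using xS2 by blast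
          then show ?thesis using P2(3) unfolding M_def by blast
        qed
      qed
    qed
    show "\<forall>x\<in>S - X. \<forall>e1\<in>M. \<forall>e2\<in>M. x \<in> e1 \<longrightarrow> x \<in> e2 \<longrightarrow> e1 = e2"
    proof (intro ballI impI)
      fix x e1 e2 assume x: "x \<in> S - X" and e1: "e1 \<in> M" and e2: "e2 \<in> M" and xe1: "x \<in> e1" and xe2: "x \<in> e2"
      show "e1 = e2"
      proof (cases "x \<in> S1")
        case xS1: True
        have xV: "x \<in> V1" "x \<notin> V2" using inV1 n12 xS1 by blast+
        have noM2: "e \<notin> M2" if "x \<in> e" for e using that P2(2) S2V xV by blast
        show ?thesis
        proof (cases "x \<in> X1")
          case True
          have noM1: "e \<notin> M1" if "x \<in> e" for e using that P1(2) True by blast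
          have canon: "e = {x, g x}" if eM: "e \<in> M" "x \<in> e" for e
          proof -
            have "e \<in> Mc" using eM noM1 noM2 unfolding M_def by blast
            then obtain y where y: "y \<in> A1" "e = {y, g y}" using McE by blast
            have "g y \<in> V2" using gA[OF y(1)] A2S S2V by blast
            then have "x = y" using y(2) eM(2) xV by blast
            then show ?thesis using y by simp
          qed
          show ?thesis using canon[OF e1 xe1] canon[OF e2 xe2] by simp
        next
          case False
          have noMc: "e \<notin> Mc" if xe: "x \<in> e" for e
          proof
            assume "e \<in> Mc"
            then obtain y where y: "y \<in> A1" "e = {y, g y}" using McE by blast
            have "g y \<in> V2" using gA[OF y(1)] A2S S2V by blast
            then have "x = y" using y(2) xe xV by blast
            then show False using y(1) A1 False by blast
          qed
          have "e1 \<in> M1" "e2 \<in> M1" using e1 e2 xe1 xe2 noMc noM2 unfolding M_def by blast+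
          moreover have "x \<in> S1 - X1" using xS1 False by blast
          ultimately show ?thesis using P1(4) xe1 xe2 by blast
        qed
      next
        case False
        then have xS2: "x \<in> S2" using x unfolding S_def by blast
        have xV: "x \<in> V2" "x \<notin> V1" using inV2 n12 xS2 by blast+
        have noM1: "e \<notin> M1" if "x \<in> e" for e using that P1(2) S1V xV by blast
        have McV: "\<exists>y\<in>A1. e = {y, g y} \<and> x = g y" if eM: "e \<in> Mc" "x \<in> e" for e
        proof -
          obtain y where y: "y \<in> A1" "e = {y, g y}" using McE eM(1) by blast
          have "y \<in> V1" using y(1) A1S S1V by blast
          then have "x = g y" using y(2) eM(2) xV by blast
          then show ?thesis using y by blast
        qed
        show ?thesis
        proof (cases "x \<in> X2")
          case True
          have noM2: "e \<notin> M2" if "x \<in> e" for e using that P2(2) True by blast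
          have "e1 \<in> Mc" "e2 \<in> Mc" using e1 e2 xe1 xe2 noM1 noM2 unfolding M_def by blast+
          then obtain y1 y2 where y1: "y1 \<in> A1" "e1 = {y1, g y1}" "x = g y1"
            and y2: "y2 \<in> A1" "e2 = {y2, g y2}" "x = g y2" using McV xe1 xe2 by meson
          have "y1 = y2" using ginj y1 y2 unfolding inj_on_def by metis
          then show ?thesis using y1 y2 by simp
        next
          case False
          have noMc: "e \<notin> Mc" if eM: "e \<in> M" "x \<in> e" for e
          proof
            assume "e \<in> Mc"
            then obtain y where y: "y \<in> A1" "x = g y" using McV eM(2) by blast
            then have "x \<in> A2" using gA by blast
            then show False using A2 False by blast
          qed
          have "e1 \<in> M2" "e2 \<in> M2" using e1 e2 xe1 xe2 noMc noM1 unfolding M_def by blast+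
          moreover have "x \<in> S2 - X2" using xS2 False by blast
          ultimately show ?thesis using P2(4) xe1 xe2 by blast
        qed
      qed
    qed
  qed
  show ?thesis unfolding feas_def pm_iff
    using SVV dom Xsub cardX pmM unfolding S_def by blast
qed

definition Fm :: "nat \<Rightarrow> nat \<Rightarrow> nat \<Rightarrow> nat \<Rightarrow> nat" where
 "Fm al bl ar br = (if al > br then al - br
     else if ar > bl then ar - bl
     else nat \<bar>int al - int ar\<bar> mod 2)"

lemma absmod: "nat \<bar>int a - int b\<bar> mod 2 = (if even (a + b) then 0 else (1::nat))"
proof (cases "a \<le> b")
  case True
  then have "nat \<bar>int a - int b\<bar> = b - a" by simp
  moreover have "(b - a) mod 2 = (if even (a + b) then 0 else (1::nat))" using True by presburger
  ultimately show ?thesis by (simp only:)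
next
  case False
  then have "nat \<bar>int a - int b\<bar> = a - b" by simp
  moreover have "(a - b) mod 2 = (if even (a + b) then 0 else (1::nat))" using False by presburger
  ultimately show ?thesis by (simp only:)
qed

lemma Fm_alt: "Fm al bl ar br = (if al > br then al - br
     else if ar > bl then ar - bl else if even (al + ar) then 0 else 1)"
  unfolding Fm_def absmod by simp

lemma arith_lb:
  assumes a: "al \<le> kl" "kl \<le> bl" "even kl = even al" "ar \<le> kr" "kr \<le> br" "even kr = even ar"
  shows "Fm al bl ar br \<le> kl + kr - 2 * min kl kr"
proof -
  have D: "kl + kr - 2*min kl kr = (if kl \<le> kr then kr - kl else kl - kr)" by (simp add: min_def)
  show ?thesis
  proof (cases "al > br")
    case True
    then have "Fm al bl ar br = al - br" unfolding Fm_alt by simp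
    moreover have "kl + kr - 2*min kl kr = kl - kr" using True a unfolding D by simp
    ultimately show ?thesis using True a by simp
  next
    case F1: False
    show ?thesis
    proof (cases "ar > bl")
      case True
      then have "Fm al bl ar br = ar - bl" using F1 unfolding Fm_alt by simp
      moreover have "kl + kr - 2*min kl kr = kr - kl" using True a unfolding D by simp
      ultimately show ?thesis using True a by simp
    next
      case F2: False
      show ?thesis
      proof (cases "even (al + ar)")
        case True
        then have "Fm al bl ar br = 0" using F1 F2 unfolding Fm_alt by simp
        then show ?thesis by simp
      next
        case False
        then have "Fm al bl ar br = 1" using F1 F2 unfolding Fm_alt by simp
        moreover have "kl \<noteq> kr"
        proof
          assume "kl = kr"
          then have "even al = even ar" using a(3,6) by simp
          then show False using False by simp
        qed
        ultimately show ?thesis unfolding D by auto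
      qed
    qed
  qed
qed

lemma arith_ex:
  assumes a: "al \<le> bl" "even bl = even al" "ar \<le> br" "even br = even ar"
  shows "\<exists>kl kr. al \<le> kl \<and> kl \<le> bl \<and> even kl = even al \<and> ar \<le> kr \<and> kr \<le> br \<and> even kr = even ar
     \<and> kl + kr - 2 * min kl kr = Fm al bl ar br"
proof (cases "al > br")
  case True
  then have "Fm al bl ar br = al - br" unfolding Fm_alt by simp
  then show ?thesis using True a by (intro exI[of _ al] exI[of _ br]) (simp add: min_def)
next
  case F1: False
  show ?thesis
  proof (cases "ar > bl")
    case True
    then have "Fm al bl ar br = ar - bl" using F1 unfolding Fm_alt by simp
    then show ?thesis using True a by (intro exI[of _ bl] exI[of _ ar]) (simp add: min_def)
  next
    case F2: False
    show ?thesis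
    proof (cases "even (al + ar)")
      case True
      then have F0: "Fm al bl ar br = 0" using F1 F2 unfolding Fm_alt by simp
      have pe: "even al = even ar" using True by simp
      show ?thesis
      proof (cases "al \<le> ar")
        case True then show ?thesis using a F1 F2 pe F0
          by (intro exI[of _ ar] exI[of _ ar]) simp
      next
        case False then show ?thesis using a F1 F2 pe F0
          by (intro exI[of _ al] exI[of _ al]) simp
      qed
    next
      case False
      then have F0: "Fm al bl ar br = 1" using F1 F2 unfolding Fm_alt by simp
      have pe: "even al \<noteq> even ar" using False by simp
      show ?thesis
      proof (cases "al \<le> ar")
        case True
        have "al \<noteq> ar" using pe by auto
        then have lt: "al < ar" using True by simp
        have pa: "even (ar - 1) = even al" using lt pe by (cases ar) auto
        have "ar \<noteq> bl" using pe a(2) by auto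
        then have "ar - 1 < bl" using F2 by simp
        moreover have "(ar - 1) + ar - 2 * min (ar - 1) ar = Fm al bl ar br" using lt F0 by (cases al; cases ar) (auto simp: min_def)
        moreover have "al \<le> ar - 1" using lt by simp
        ultimately have "al \<le> ar - 1 \<and> ar - 1 \<le> bl \<and> even (ar - 1) = even al \<and> ar \<le> ar \<and> ar \<le> br \<and> even ar = even ar
          \<and> (ar - 1) + ar - 2 * min (ar - 1) ar = Fm al bl ar br"
          using a(3) pa by (intro conjI) simp_all
        then show ?thesis by blast
      next
        case False
        then have lt: "ar < al" by simp
        have pa: "even (al - 1) = even ar" using lt pe by (cases al) auto
        have "al \<noteq> br" using pe a(4) by auto
        then have "al - 1 < br" using F1 by simp
        moreover have "al + (al - 1) - 2 * min al (al - 1) = Fm al bl ar br" using lt F0 by (cases al; cases ar) (auto simp: min_def)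
        moreover have "ar \<le> al - 1" using lt by simp
        ultimately have "al \<le> al \<and> al \<le> bl \<and> even al = even al \<and> ar \<le> al - 1 \<and> al - 1 \<le> br \<and> even (al - 1) = even ar
          \<and> al + (al - 1) - 2 * min al (al - 1) = Fm al bl ar br"
          using a(1) pa by (intro conjI) simp_all
        then show ?thesis by blast
      qed
    qed
  qed
qed

lemma gamma_le: "k_feasible u k S \<Longrightarrow> gamma_hat u k \<le> enat (card S)"
  unfolding gamma_hat_def by (rule INF_lower) simp

lemma gamma_attain:
  assumes "gamma_hat u k \<noteq> \<infinity>"
  shows "\<exists>S. k_feasible u k S \<and> gamma_hat u k = enat (card S)"
proof -
  let ?A = "{S. k_feasible u k S}"
  have ne: "?A \<noteq> {}"
  proof
    assume "?A = {}"
    then have "gamma_hat u k = Inf ((\<lambda>S. enat (card S)) ` {})" unfolding gamma_hat_def by simp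
    then have "gamma_hat u k = \<infinity>" by (simp add: Inf_enat_def)
    then show False using assms by simp
  qed
  then have ne2: "(\<lambda>S. enat (card S)) ` ?A \<noteq> {}" by blast
  have "gamma_hat u k = (LEAST x. x \<in> (\<lambda>S. enat (card S)) ` ?A)"
    unfolding gamma_hat_def Inf_enat_def by (rule if_not_P[OF ne2])
  moreover have "(LEAST x. x \<in> (\<lambda>S. enat (card S)) ` ?A) \<in> (\<lambda>S. enat (card S)) ` ?A"
    using ne2 by (metis LeastI ex_in_conv)
  ultimately show ?thesis by auto
qed

lemma min_le: "k \<le> card (hatTS u) \<Longrightarrow> min_hat u \<le> gamma_hat u k"
  unfolding min_hat_def by (rule Min_le) auto

lemma min_in: "\<exists>k\<le>card (hatTS u). gamma_hat u k = min_hat u"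
proof -
  have "min_hat u \<in> gamma_hat u ` {0..card (hatTS u)}"
    unfolding min_hat_def by (rule Min_in) auto
  then show ?thesis by auto
qed

definition Zs :: "'a dtree \<Rightarrow> nat set" where
  "Zs u = {k. k \<le> card (hatTS u) \<and> gamma_hat u k = min_hat u}"

lemma Zs_fin: "finite (Zs u)" unfolding Zs_def by simp
lemma Zs_ne: "Zs u \<noteq> {}" unfolding Zs_def using min_in by blast

lemma alpha_Zs: "alpha_hat u = Min (Zs u)" unfolding alpha_hat_def Zs_def by simp
lemma beta_Zs: "beta_hat u = Max (Zs u)" unfolding beta_hat_def Zs_def by simp

lemma alpha_in: "alpha_hat u \<in> Zs u" unfolding alpha_Zs using Zs_fin Zs_ne by (rule Min_in)
lemma beta_in: "beta_hat u \<in> Zs u" unfolding beta_Zs using Zs_fin Zs_ne by (rule Max_in)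
lemma alpha_le: "k \<in> Zs u \<Longrightarrow> alpha_hat u \<le> k" unfolding alpha_Zs using Zs_fin by (rule Min_le)
lemma beta_ge: "k \<in> Zs u \<Longrightarrow> k \<le> beta_hat u" unfolding beta_Zs using Zs_fin by (rule Max_ge)

lemma gamma_parity:
  assumes g: "gg (hatV u) (hatTS u) (hatE u)" and e: "gamma_hat u k = enat m"
  shows "k \<le> m \<and> even (m - k)"
proof -
  obtain S where S: "k_feasible u k S" "gamma_hat u k = enat (card S)" using gamma_attain e by fastforce
  have "card S = m" using S(2) e by simp
  moreover have "finite (hatV u)" "eok (hatV u) (hatE u)" using g unfolding gg_eok by blast+
  ultimately show ?thesis using feas_card S(1) unfolding kf_feas by blast
qed

lemma Zs_char:
  assumes g: "gg (hatV u) (hatTS u) (hatE u)" and fin: "min_hat u = enat m" and P: "property_P u"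
  shows "Zs u = {k. alpha_hat u \<le> k \<and> k \<le> beta_hat u \<and> even k = even (alpha_hat u)}"
proof
  show "Zs u \<subseteq> {k. alpha_hat u \<le> k \<and> k \<le> beta_hat u \<and> even k = even (alpha_hat u)}"
  proof
    fix k assume k: "k \<in> Zs u"
    have "gamma_hat u k = enat m" using k fin unfolding Zs_def by simp
    then have p1: "k \<le> m \<and> even (m - k)" using gamma_parity g by blast
    have "gamma_hat u (alpha_hat u) = enat m" using alpha_in[of u] fin unfolding Zs_def by simp
    then have p2: "alpha_hat u \<le> m \<and> even (m - alpha_hat u)" using gamma_parity g by blast
    have "even k = even (alpha_hat u)" using p1 p2 by auto
    then show "k \<in> {k. alpha_hat u \<le> k \<and> k \<le> beta_hat u \<and> even k = even (alpha_hat u)}"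
      using alpha_le beta_ge k by blast
  qed
  show "{k. alpha_hat u \<le> k \<and> k \<le> beta_hat u \<and> even k = even (alpha_hat u)} \<subseteq> Zs u"
  proof
    fix k assume k: "k \<in> {k. alpha_hat u \<le> k \<and> k \<le> beta_hat u \<and> even k = even (alpha_hat u)}"
    then have k1: "alpha_hat u \<le> k" "k \<le> beta_hat u" "even k = even (alpha_hat u)" by auto
    have bn: "beta_hat u \<le> card (hatTS u)" using beta_in unfolding Zs_def by blast
    show "k \<in> Zs u"
    proof (cases "k = alpha_hat u \<or> k = beta_hat u")
      case True then show ?thesis using alpha_in beta_in by blast
    next
      case False
      then have lt: "alpha_hat u < k" "k < beta_hat u" using k1 by auto
      have ev: "even (k - alpha_hat u)" using k1 by auto
      have "k \<le> card (hatTS u)" using lt bn by simp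
      then have "gamma_hat u k = min_hat u" using P lt ev unfolding property_P_def by auto
      then show ?thesis unfolding Zs_def using \<open>k \<le> card (hatTS u)\<close> by blast
    qed
  qed
qed

lemma min_finite:
  assumes "gg (hatV u) (hatTS u) (hatE u)" "\<forall>x\<in>hatV u - hatTS u. \<exists>y. {x,y} \<in> hatE u"
  shows "\<exists>m. min_hat u = enat m"
proof -
  obtain k S where kS: "k \<le> card (hatTS u)" "feas (hatV u) (hatTS u) (hatE u) k S"
    using exists_feas[OF assms] by blast
  have "min_hat u \<le> enat (card S)" using min_le[OF kS(1)] gamma_le[of u k S] kS(2) unfolding kf_feas
    by (meson order_trans)
  then show ?thesis by (cases "min_hat u") auto
qed

theorem lemma8:
  fixes T v vl vr :: "'a dtree" and V :: "'a set" and E :: "'a set set"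
  assumes "decomposition_tree T V E"
    and "distance_hereditary V E"
    and "v \<in> subtrees T"
    and "v = Node TrueTwin vl vr"
    and "property_P vl" and "property_P vr"
  shows "alpha_hat v =
    (if alpha_hat vl > beta_hat vr then alpha_hat vl - beta_hat vr
     else if alpha_hat vr > beta_hat vl then alpha_hat vr - beta_hat vl
     else nat \<bar>int (alpha_hat vl) - int (alpha_hat vr)\<bar> mod 2)"
proof -
  have dv: "distinct (leaf_list v)" using assms(1,3) distinct_sub unfolding decomposition_tree_def by blast
  then have dl: "distinct (leaf_list vl)" and dr: "distinct (leaf_list vr)"
    and dj: "hatV vl \<inter> hatV vr = {}" using assms(4) by (auto simp: hatV_def)
  define V1 where "V1 = hatV vl"
  define V2 where "V2 = hatV vr"
  define TS1 where "TS1 = hatTS vl"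
  define TS2 where "TS2 = hatTS vr"
  define E1 where "E1 = hatE vl"
  define E2 where "E2 = hatE vr"
  have inv1: "gg V1 TS1 E1" "\<forall>x\<in>V1 - TS1. \<exists>y. {x,y} \<in> E1"
    using invariant[OF dl] unfolding V1_def TS1_def E1_def by blast+
  have inv2: "gg V2 TS2 E2" "\<forall>x\<in>V2 - TS2. \<exists>y. {x,y} \<in> E2"
    using invariant[OF dr] unfolding V2_def TS2_def E2_def by blast+
  have dj12: "V1 \<inter> V2 = {}" using dj unfolding V1_def V2_def .
  have fin1: "finite V1" and T1: "TS1 \<subseteq> V1" using inv1(1) unfolding gg_eok by blast+
  have fin2: "finite V2" and T2: "TS2 \<subseteq> V2" using inv2(1) unfolding gg_eok by blast+
  obtain ml where ml: "min_hat vl = enat ml"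
    using min_finite[of vl] inv1 unfolding V1_def TS1_def E1_def by blast
  obtain mr where mr: "min_hat vr = enat mr"
    using min_finite[of vr] inv2 unfolding V2_def TS2_def E2_def by blast
  have Zl: "Zs vl = {k. alpha_hat vl \<le> k \<and> k \<le> beta_hat vl \<and> even k = even (alpha_hat vl)}"
    using Zs_char[OF _ ml assms(5)] inv1(1) unfolding V1_def TS1_def E1_def by blast
  have Zr: "Zs vr = {k. alpha_hat vr \<le> k \<and> k \<le> beta_hat vr \<and> even k = even (alpha_hat vr)}"
    using Zs_char[OF _ mr assms(6)] inv2(1) unfolding V2_def TS2_def E2_def by blast
  have kfv: "k_feasible v k S \<longleftrightarrow> feas (V1 \<union> V2) (TS1 \<union> TS2) (E1 \<union> E2 \<union> cross TS1 TS2) k S" for k S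
    unfolding kf_feas assms(4) hatE_TT hatV_Node hatTS.simps(2) V1_def V2_def TS1_def TS2_def E1_def E2_def
    by (rule refl)
  have kf1: "k_feasible vl k S \<longleftrightarrow> feas V1 TS1 E1 k S" for k S
    unfolding kf_feas V1_def TS1_def E1_def by (rule refl)
  have kf2: "k_feasible vr k S \<longleftrightarrow> feas V2 TS2 E2 k S" for k S
    unfolding kf_feas V2_def TS2_def E2_def by (rule refl)
  have nv: "card (hatTS v) = card TS1 + card TS2"
  proof -
    have "hatTS v = TS1 \<union> TS2" unfolding assms(4) TS1_def TS2_def by simp
    moreover have "TS1 \<inter> TS2 = {}" using T1 T2 dj12 by blast
    moreover have "finite TS1" "finite TS2" using T1 T2 fin1 fin2 finite_subset by blast+
    ultimately show ?thesis by (simp add: card_Un_disjoint)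
  qed
  have LB: "enat (ml + mr) \<le> gamma_hat v k \<and>
     (gamma_hat v k = enat (ml + mr) \<longrightarrow> (\<exists>kl\<in>Zs vl. \<exists>kr\<in>Zs vr. kl + kr - 2 * min kl kr \<le> k))" for k
  proof (cases "gamma_hat v k = \<infinity>")
    case True then show ?thesis by simp
  next
    case False
    obtain S where S: "k_feasible v k S" "gamma_hat v k = enat (card S)" using gamma_attain[OF False] by blast
    have fS: "feas (V1 \<union> V2) (TS1 \<union> TS2) (E1 \<union> E2 \<union> cross TS1 TS2) k S" using S(1) kfv by blast
    obtain a b c where abc: "k = a + b" "feas V1 TS1 E1 (a+c) (S \<inter> V1)" "feas V2 TS2 E2 (b+c) (S \<inter> V2)"
      using split_feas[OF inv1(1) inv2(1) dj12 fS] by blast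
    have ac: "a + c \<le> card (hatTS vl)" using feas_le_TS[OF abc(2) fin1 T1] unfolding TS1_def .
    have bc: "b + c \<le> card (hatTS vr)" using feas_le_TS[OF abc(3) fin2 T2] unfolding TS2_def .
    have g1: "gamma_hat vl (a+c) \<le> enat (card (S \<inter> V1))" using gamma_le abc(2) kf1 by blast
    have g2: "gamma_hat vr (b+c) \<le> enat (card (S \<inter> V2))" using gamma_le abc(3) kf2 by blast
    have m1: "enat ml \<le> gamma_hat vl (a+c)" using min_le[OF ac] ml by simp
    have m2: "enat mr \<le> gamma_hat vr (b+c)" using min_le[OF bc] mr by simp
    have c1: "ml \<le> card (S \<inter> V1)" using m1 g1 by (meson enat_ord_simps(1) order_trans)
    have c2: "mr \<le> card (S \<inter> V2)" using m2 g2 by (meson enat_ord_simps(1) order_trans)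
    have SV: "S \<subseteq> V1 \<union> V2" using fS unfolding feas_def by blast
    have cS: "card S = card (S \<inter> V1) + card (S \<inter> V2)"
    proof -
      have "S = (S \<inter> V1) \<union> (S \<inter> V2)" using SV by blast
      moreover have "(S \<inter> V1) \<inter> (S \<inter> V2) = {}" using dj12 by blast
      moreover have "finite (S \<inter> V1)" "finite (S \<inter> V2)" using fin1 fin2 by simp_all
      ultimately show ?thesis by (metis card_Un_disjoint)
    qed
    have part1: "enat (ml + mr) \<le> gamma_hat v k" using S(2) cS c1 c2 by simp
    have part2: "\<exists>kl\<in>Zs vl. \<exists>kr\<in>Zs vr. kl + kr - 2 * min kl kr \<le> k" if eq: "gamma_hat v k = enat (ml + mr)"
    proof -
      have "card S = ml + mr" using eq S(2) by simp
      then have e1: "card (S \<inter> V1) = ml" and e2: "card (S \<inter> V2) = mr" using cS c1 c2 by linarith+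
      have "gamma_hat vl (a+c) = min_hat vl" using g1 m1 e1 ml by (metis antisym)
      then have z1: "a + c \<in> Zs vl" unfolding Zs_def using ac by blast
      have "gamma_hat vr (b+c) = min_hat vr" using g2 m2 e2 mr by (metis antisym)
      then have z2: "b + c \<in> Zs vr" unfolding Zs_def using bc by blast
      have "(a + c) + (b + c) - 2 * min (a + c) (b + c) \<le> k" using abc(1) by (auto simp add: min_def)
      then show ?thesis using z1 z2 by blast
    qed
    show ?thesis using part1 part2 by blast
  qed
  have UB: "gamma_hat v (kl + kr - 2 * min kl kr) \<le> enat (ml + mr)" if kl: "kl \<in> Zs vl" and kr: "kr \<in> Zs vr" for kl kr
  proof -
    have "gamma_hat vl kl = enat ml" using kl ml unfolding Zs_def by simp
    then obtain S1 where S1: "k_feasible vl kl S1" "enat ml = enat (card S1)" using gamma_attain by fastforce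
    have "gamma_hat vr kr = enat mr" using kr mr unfolding Zs_def by simp
    then obtain S2 where S2: "k_feasible vr kr S2" "enat mr = enat (card S2)" using gamma_attain by fastforce
    have f1: "feas V1 TS1 E1 kl S1" using S1(1) kf1 by blast
    have f2: "feas V2 TS2 E2 kr S2" using S2(1) kf2 by blast
    have "k_feasible v (kl + kr - 2 * min kl kr) (S1 \<union> S2)"
      using combine[OF inv1(1) inv2(1) dj12 f1 f2] kfv by blast
    then have "gamma_hat v (kl + kr - 2 * min kl kr) \<le> enat (card (S1 \<union> S2))" by (rule gamma_le)
    moreover have "card (S1 \<union> S2) = ml + mr"
    proof -
      have "S1 \<subseteq> V1" "S2 \<subseteq> V2" using f1 f2 unfolding feas_def by blast+
      then have "S1 \<inter> S2 = {}" "finite S1" "finite S2" using dj12 fin1 fin2 finite_subset by blast+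
      then show ?thesis using S1(2) S2(2) by (simp add: card_Un_disjoint)
    qed
    ultimately show ?thesis by simp
  qed
  define al where "al = alpha_hat vl"
  define bl where "bl = beta_hat vl"
  define ar where "ar = alpha_hat vr"
  define br where "br = beta_hat vr"
  have Zl': "Zs vl = {k. al \<le> k \<and> k \<le> bl \<and> even k = even al}" using Zl unfolding al_def bl_def .
  have Zr': "Zs vr = {k. ar \<le> k \<and> k \<le> br \<and> even k = even ar}" using Zr unfolding ar_def br_def .
  have abl: "al \<le> bl" "even bl = even al" using beta_in[of vl] unfolding Zl' bl_def by auto
  have abr: "ar \<le> br" "even br = even ar" using beta_in[of vr] unfolding Zr' br_def by auto
  define F where "F = Fm al bl ar br"
  obtain kl kr where kk: "al \<le> kl" "kl \<le> bl" "even kl = even al" "ar \<le> kr" "kr \<le> br" "even kr = even ar"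
     "kl + kr - 2 * min kl kr = F"
    using arith_ex[OF abl(1,2) abr(1,2)] unfolding F_def by blast
  have klZ: "kl \<in> Zs vl" using kk unfolding Zl' by blast
  have krZ: "kr \<in> Zs vr" using kk unfolding Zr' by blast
  have gF: "gamma_hat v F = enat (ml + mr)"
    using UB[OF klZ krZ] LB[of F] kk(7) by (metis antisym)
  have Fn: "F \<le> card (hatTS v)"
  proof -
    have "kl \<le> card TS1" using klZ unfolding Zs_def TS1_def by blast
    moreover have "kr \<le> card TS2" using krZ unfolding Zs_def TS2_def by blast
    ultimately show ?thesis using kk(7) nv by (simp add: min_def)
  qed
  have minv: "min_hat v = enat (ml + mr)"
    unfolding min_hat_def
  proof (rule Min_eqI)
    show "finite (gamma_hat v ` {0..card (hatTS v)})" by simp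
    show "\<And>y. y \<in> gamma_hat v ` {0..card (hatTS v)} \<Longrightarrow> enat (ml + mr) \<le> y" using LB by blast
    show "enat (ml + mr) \<in> gamma_hat v ` {0..card (hatTS v)}" using gF Fn by force
  qed
  have "alpha_hat v = F"
    unfolding alpha_Zs
  proof (rule Min_eqI)
    show "finite (Zs v)" by (rule Zs_fin)
    show "F \<in> Zs v" unfolding Zs_def using gF Fn minv by simp
    fix k assume k: "k \<in> Zs v"
    then have "gamma_hat v k = enat (ml + mr)" unfolding Zs_def using minv by simp
    then obtain kl' kr' where kl': "kl' \<in> Zs vl" and kr': "kr' \<in> Zs vr" and d: "kl' + kr' - 2 * min kl' kr' \<le> k"
      using LB[of k] by blast
    have "F \<le> kl' + kr' - 2 * min kl' kr'"
      unfolding F_def by (rule arith_lb) (use kl' kr' in \<open>auto simp: Zl' Zr'\<close>)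
    then show "F \<le> k" using d by simp
  qed
  then show ?thesis unfolding F_def Fm_def al_def bl_def ar_def br_def .
qed

end
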